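(* (dS shift.) Consider the single-fluid shifted system with $\sigma>0$, and let $t_{\mathrm b},\xi_{\mathrm b},\xi_0,t_0$ be as in the time-interval setup, with $\sigma<h(t_{\mathrm b})^2$, and $b:=\max_{t\in[t_{\mathrm b},t_0]}\sqrt2\,|y_{\mathrm i}(t)|h(t)/l>0$. Then $$\Delta t_{\mathrm b0}\ \ge\ \frac{1}{2\sqrt{2\xi_0}}\,\frac{1}{b\,c\,l}\,\frac{\xi_0-\xi_{\mathrm b}}{\sqrt{1-\sigma/h(t_{\mathrm b})^2}}.$$
   Context: Shifted single-fluid system. Fix real constants $c>0$, $l>0$, $w\in[-1,1]$ and $\sigma\in\mathbb{R}$. Let $I\subseteq\mathbb R$ be an interval and $x,y_{\mathrm r},y_{\mathrm i},z,h$ real $C^1$ functions on $I$ with $h>0$, $z\ge0$. Define $\xi=x^2+\frac{1+w}{2}z^2$. Assume on $I$: $\dot x=[-x+4c\,y_{\mathrm r}y_{\mathrm i}+x\xi]h$, $\dot y_{\mathrm r}=[\xi y_{\mathrm r}-c\,x\,y_{\mathrm i}]h$, $\dot y_{\mathrm i}=[\xi y_{\mathrm i}+c\,x\,y_{\mathrm r}]h$, $\dot z=[-\frac{1+w}{2}+\xi]zh$, $\dot h=-\xi h^2$, with constraints $x^2+4y_{\mathrm r}^2+z^2=1-\sigma/h^2$ and $y_{\mathrm r}^2+y_{\mathrm i}^2=\frac{l^2}{2h^2}$. (Here $\sigma=L^2$ encodes a cosmological constant $\Lambda$ added to the cosine potential, of the sign of $\Lambda$.) Time-interval setup: let $t_{\mathrm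 b}\in I$, $\xi_{\mathrm b}:=\xi(t_{\mathrm b})$, and let $\xi_0$ be a real number with $\xi_0>0$ and $\xi_{\mathrm b}\le\xi_0\le\frac{1+w}{2}$. Assume the set $\{t\in I:\ t\ge t_{\mathrm b},\ \xi(t)=\xi_0\}$ is nonempty and let $t_0$ be its minimum (so $\xi(t)\le\xi_0$ for all $t\in[t_{\mathrm b},t_0]$); put $\Delta t_{\mathrm b0}=t_0-t_{\mathrm b}$. *)

theory Defs
  imports "HOL-Analysis.Analysis"
begin

definition xi_fun :: "real \<Rightarrow> (real \<Rightarrow> real) \<Rightarrow> (real \<Rightarrow> real) \<Rightarrow> real \<Rightarrow> real" where
  "xi_fun w x z t = (x t)^2 + (1 + w) / 2 * (z t)^2"

definition shifted_single_fluid ::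
  "real \<Rightarrow> real \<Rightarrow> real \<Rightarrow> real \<Rightarrow> real set \<Rightarrow>
   (real \<Rightarrow> real) \<Rightarrow> (real \<Rightarrow> real) \<Rightarrow> (real \<Rightarrow> real) \<Rightarrow> (real \<Rightarrow> real) \<Rightarrow> (real \<Rightarrow> real) \<Rightarrow> bool" where
  "shifted_single_fluid c l w \<sigma> I x yr yi z h \<longleftrightarrow>
     c > 0 \<and> l > 0 \<and> -1 \<le> w \<and> w \<le> 1 \<and> is_interval I \<and>
     (\<forall>f\<in>{x, yr, yi, z, h}. \<exists>f'. continuous_on I f' \<and>
         (\<forall>t\<in>I. (f has_real_derivative f' t) (at t within I))) \<and>
     (\<forall>t\<in>I. h t > 0 \<and> z t \<ge> 0) \<and>
     (\<forall>t\<in>I.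
        (x has_real_derivative
            (- x t + 4 * c * yr t * yi t + x t * xi_fun w x z t) * h t) (at t within I) \<and>
        (yr has_real_derivative
            (xi_fun w x z t * yr t - c * x t * yi t) * h t) (at t within I) \<and>
        (yi has_real_derivative
            (xi_fun w x z t * yi t + c * x t * yr t) * h t) (at t within I) \<and>
        (z has_real_derivative
            (- (1 + w) / 2 + xi_fun w x z t) * z t * h t) (at t within I) \<and>
        (h has_real_derivative - xi_fun w x z t * (h t)^2) (at t within I) \<and>
        (x t)^2 + 4 * (yr t)^2 + (z t)^2 = 1 - \<sigma> / (h t)^2 \<and>
        (yr t)^2 + (yi t)^2 = l^2 / (2 * (h t)^2))"

end

theory Submission
  imports Defs
begin

lemma cs_aux:
  fixes X Z a :: real
  assumes "0 \<le> a" "a \<le> 1" "X^2 + Z^2 \<le> 1"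
  shows "(X^2 + a*Z^2)^2 \<le> X^2 + a^2*Z^2"
proof -
  have "(X^2 + a*Z^2)^2 = (X^2+Z^2)*(X^2 + a^2*Z^2) - X^2*Z^2*(1-a)^2"
    by (simp add: power2_eq_square algebra_simps)
  also have "\<dots> \<le> (X^2+Z^2)*(X^2 + a^2*Z^2)" by simp
  also have "\<dots> \<le> 1*(X^2 + a^2*Z^2)"
    by (rule mult_right_mono) (use assms in auto)
  finally show ?thesis by simp
qed

theorem mainTheorem5:
  fixes c l w \<sigma> :: real and I :: "real set"
    and x yr yi z h :: "real \<Rightarrow> real"
    and tb t0 \<xi>0 b :: real
  assumes sys: "shifted_single_fluid c l w \<sigma> I x yr yi z h"
    and sigma_pos: "\<sigma> > 0"
    and tb: "tb \<in> I"
    and xi0: "\<xi>0 > 0" "xi_fun w x z tb \<le> \<xi>0" "\<xi>0 \<le> (1 + w) / 2"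
    and t0: "t0 \<in> I" "t0 \<ge> tb" "xi_fun w x z t0 = \<xi>0"
    and t0_min: "\<forall>t\<in>I. t \<ge> tb \<and> xi_fun w x z t = \<xi>0 \<longrightarrow> t0 \<le> t"
    and sigma_lt: "\<sigma> < (h tb)^2"
    and b_def: "b = (SUP t \<in> {tb..t0}. sqrt 2 * \<bar>yi t\<bar> * h t / l)"
    and b_pos: "b > 0"
  shows "t0 - tb \<ge> 1 / (2 * sqrt (2 * \<xi>0)) * (1 / (b * c * l))
            * ((\<xi>0 - xi_fun w x z tb) / sqrt (1 - \<sigma> / (h tb)^2))"
proof -
  define a where "a = (1 + w) / 2"
  define \<xi> where "\<xi> = xi_fun w x z"
  have \<xi>_eq: "\<xi> t = (x t)^2 + a * (z t)^2" for t
    unfolding \<xi>_def a_def xi_fun_def by simp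
  have cpos: "c > 0" and lpos: "l > 0" and wl: "-1 \<le> w" and wu: "w \<le> 1"
    and intI: "is_interval I" using sys unfolding shifted_single_fluid_def by auto
  have a0: "0 \<le> a" and a1: "a \<le> 1" using wl wu unfolding a_def by auto
  have hpos: "\<And>t. t \<in> I \<Longrightarrow> h t > 0" using sys unfolding shifted_single_fluid_def by auto
  define X' where "X' t = (- x t + 4 * c * yr t * yi t + x t * \<xi> t) * h t" for t
  define Z' where "Z' t = (- (1 + w) / 2 + \<xi> t) * z t * h t" for t
  have dx: "\<And>t. t \<in> I \<Longrightarrow> (x has_real_derivative X' t) (at t within I)"
    and dz: "\<And>t. t \<in> I \<Longrightarrow> (z has_real_derivative Z' t) (at t within I)"
    and dh: "\<And>t. t \<in> I \<Longrightarrow> (h has_real_derivative - \<xi> t * (h t)^2) (at t within I)"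
    and con1: "\<And>t. t \<in> I \<Longrightarrow> (x t)^2 + 4 * (yr t)^2 + (z t)^2 = 1 - \<sigma> / (h t)^2"
    and con2: "\<And>t. t \<in> I \<Longrightarrow> (yr t)^2 + (yi t)^2 = l^2 / (2 * (h t)^2)"
    using sys unfolding shifted_single_fluid_def X'_def Z'_def \<xi>_def by auto
  have dyi: "\<And>t. t \<in> I \<Longrightarrow> \<exists>D. (yi has_real_derivative D) (at t within I)"
    using sys unfolding shifted_single_fluid_def by blast
  have sub: "{tb..t0} \<subseteq> I" using intI tb t0(1) unfolding is_interval_1 atLeastAtMost_iff subset_iff by blast
  define D where "D t = 2 * x t * X' t + a * (2 * z t * Z' t)" for t
  have d\<xi>: "(\<xi> has_real_derivative D t) (at t within I)" if "t \<in> I" for t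
  proof -
    have "((\<lambda>t. (x t)^2 + a * (z t)^2) has_real_derivative D t) (at t within I)"
      unfolding D_def
      by (auto intro!: derivative_eq_intros dx[OF that] dz[OF that])
    moreover have "\<xi> = (\<lambda>t. (x t)^2 + a * (z t)^2)" by (rule ext) (rule \<xi>_eq)
    ultimately show ?thesis by simp
  qed
  have D_eq: "D t = h t * (2 * (\<xi> t)^2 - 2 * (x t)^2 - 2 * a^2 * (z t)^2 + 8 * c * x t * yr t * yi t)" for t
  proof -
    have Za: "Z' t = (- a + \<xi> t) * z t * h t" unfolding Z'_def a_def by (simp add: field_simps)
    show ?thesis unfolding D_def X'_def Za \<xi>_eq by (simp add: power2_eq_square algebra_simps)
  qed
  have sub_der: "(f has_real_derivative F t) (at t within {tb..t0})"
    if "\<And>t. t \<in> I \<Longrightarrow> (f has_real_derivative F t) (at t within I)" "t \<in> {tb..t0}"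
    for f F t
    using that sub by (meson DERIV_subset subsetD)
  have cont\<xi>: "continuous_on {tb..t0} \<xi>"
    by (rule DERIV_continuous_on[where D=D]) (rule sub_der[OF d\<xi>])
  have \<xi>le: "\<xi> t \<le> \<xi>0" if tt: "t \<in> {tb..t0}" for t
  proof (rule ccontr)
    assume "\<not> \<xi> t \<le> \<xi>0"
    have "continuous_on {tb..t} \<xi>" using cont\<xi> tt by (auto intro: continuous_on_subset)
    then obtain s where s: "tb \<le> s" "s \<le> t" "\<xi> s = \<xi>0"
      using IVT'[of \<xi> tb \<xi>0 t] xi0(2) \<open>\<not> \<xi> t \<le> \<xi>0\<close> tt unfolding \<xi>_def by auto
    have "s \<in> I" using s sub tt by auto
    then have "t0 \<le> s" using t0_min s unfolding \<xi>_def by blast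
    then have "t = t0" using s tt by auto
    then show False using t0(3) \<open>\<not> \<xi> t \<le> \<xi>0\<close> unfolding \<xi>_def by auto
  qed
  have hle: "h t \<le> h tb" if "t \<in> {tb..t0}" for t
  proof -
    have "\<exists>u\<in>{tb..t}. h t - h tb = (\<lambda>d. (- \<xi> u * (h u)^2) * d) (t - tb)"
      apply (rule mvt_very_simple)
      using that apply simp
      apply (rule has_field_derivative_imp_has_derivative)
      apply (rule DERIV_subset[OF sub_der[OF dh]])
      using that by auto
    then obtain u where u: "u \<in> {tb..t}" "h t - h tb = (t - tb) * (- \<xi> u * (h u)^2)" by (auto simp: mult.commute)
    have "\<xi> u \<ge> 0" unfolding \<xi>_eq using a0 by simp
    then have "(t - tb) * (- \<xi> u * (h u)^2) \<le> 0" using that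
      by (simp add: mult_nonneg_nonpos)
    then show ?thesis using u by simp
  qed
  define S where "S = 1 - \<sigma> / (h tb)^2"
  have Spos: "S > 0" unfolding S_def using sigma_lt hpos[OF tb] by (simp add: field_simps)
  have contb: "continuous_on {tb..t0} (\<lambda>t. sqrt 2 * \<bar>yi t\<bar> * h t / l)"
  proof -
    have "continuous_on {tb..t0} yi" unfolding continuous_on_eq_continuous_within
    proof
      fix t assume t: "t \<in> {tb..t0}"
      then obtain Dy where "(yi has_real_derivative Dy) (at t within I)" using dyi sub by blast
      then have "(yi has_real_derivative Dy) (at t within {tb..t0})" using DERIV_subset sub by blast
      then show "continuous (at t within {tb..t0}) yi" by (rule DERIV_continuous)
    qed
    moreover have "continuous_on {tb..t0} h"
      by (rule DERIV_continuous_on) (rule sub_der[OF dh])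
    ultimately show ?thesis using lpos by (intro continuous_intros) auto
  qed
  have bb: "sqrt 2 * \<bar>yi t\<bar> * h t / l \<le> b" if "t \<in> {tb..t0}" for t
    unfolding b_def
    by (rule cSUP_upper[OF that]) (rule bounded_imp_bdd_above, rule compact_imp_bounded,
        rule compact_continuous_image[OF contb compact_Icc])
  define K where "K = 8 * c * sqrt \<xi>0 * (sqrt S / 2) * (b * l / sqrt 2)"
  have Dle: "D t \<le> K" if tt: "t \<in> {tb..t0}" for t
  proof -
    have tI: "t \<in> I" using sub tt by auto
    have ht: "h t > 0" using hpos tI .
    have "\<sigma> / (h t)^2 \<ge> 0" using sigma_pos by simp
    then have xz1: "(x t)^2 + (z t)^2 \<le> 1" using con1[OF tI]
      by (smt (verit) zero_le_power2)
    have q: "2 * (\<xi> t)^2 - 2 * (x t)^2 - 2 * a^2 * (z t)^2 \<le> 0"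
      using cs_aux[OF a0 a1 xz1] unfolding \<xi>_eq by simp
    have "D t \<le> h t * (8 * c * x t * yr t * yi t)"
      unfolding D_eq using q ht by (intro mult_left_mono) auto
    also have "\<dots> = 8 * c * (x t * yr t * (yi t * h t))" by (simp add: algebra_simps)
    also have "\<dots> \<le> 8 * c * (\<bar>x t\<bar> * \<bar>yr t\<bar> * \<bar>yi t * h t\<bar>)"
      using cpos by (intro mult_left_mono) (auto simp: abs_mult[symmetric])
    also have "\<dots> \<le> 8 * c * (sqrt \<xi>0 * (sqrt S / 2) * (b * l / sqrt 2))"
    proof (intro mult_left_mono mult_mono)
      have "(x t)^2 \<le> \<xi>0" using \<xi>le[OF tt] a0 unfolding \<xi>_eq
        by (smt (verit) mult_nonneg_nonneg zero_le_power2)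
      then show "\<bar>x t\<bar> \<le> sqrt \<xi>0" using real_le_rsqrt by (metis abs_le_square_iff real_sqrt_abs real_sqrt_le_mono)
      have "(h t)^2 \<le> (h tb)^2" using hle[OF tt] ht by (simp add: power_mono)
      then have "\<sigma> / (h tb)^2 \<le> \<sigma> / (h t)^2" using sigma_pos ht hpos[OF tb]
        by (intro divide_left_mono) auto
      then have "4 * (yr t)^2 \<le> S" using con1[OF tI] unfolding S_def
        by (smt (verit) zero_le_power2)
      then have "(2 * \<bar>yr t\<bar>)^2 \<le> S" by (simp add: power_mult_distrib)
      then have "2 * \<bar>yr t\<bar> \<le> sqrt S" using real_le_rsqrt by blast
      then show "\<bar>yr t\<bar> \<le> sqrt S / 2" by simp
      have "sqrt 2 * \<bar>yi t\<bar> * h t \<le> b * l" using bb[OF tt] lpos by (simp add: field_simps)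
      then show "\<bar>yi t * h t\<bar> \<le> b * l / sqrt 2" using ht
        by (simp add: field_simps abs_mult)
    qed (use cpos Spos xi0(1) in auto)
    finally show ?thesis unfolding K_def by (simp add: ac_simps)
  qed
  have "\<exists>u\<in>{tb..t0}. \<xi> t0 - \<xi> tb = (\<lambda>d. D u * d) (t0 - tb)"
    apply (rule mvt_very_simple)
    using t0 apply simp
    apply (rule has_field_derivative_imp_has_derivative)
    apply (rule sub_der[OF d\<xi>])
    by auto
  then obtain u where u: "u \<in> {tb..t0}" "\<xi> t0 - \<xi> tb = (t0 - tb) * D u" by (auto simp: mult.commute)
  have main: "\<xi>0 - \<xi> tb \<le> (t0 - tb) * K"
    using u Dle[OF u(1)] t0 unfolding \<xi>_def by (simp add: mult_left_mono)
  have K_eq: "K = 2 * sqrt (2 * \<xi>0) * (b * c * l) * sqrt S"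
  proof -
    have s2: "sqrt 2 * sqrt 2 = 2" by simp
    have "K = 4 * c * sqrt \<xi>0 * sqrt S * b * l / sqrt 2" unfolding K_def by simp
    also have "\<dots> = 2 * sqrt 2 * sqrt \<xi>0 * (b * c * l) * sqrt S"
      using s2 by (simp add: field_simps)
    finally show ?thesis by (simp add: real_sqrt_mult)
  qed
  have Kpos: "K > 0" unfolding K_eq using xi0(1) b_pos cpos lpos Spos by simp
  have le1: "(\<xi>0 - \<xi> tb) / K \<le> t0 - tb" using main Kpos by (simp add: divide_le_eq)
  have eq1: "1 / (2 * sqrt (2 * \<xi>0)) * (1 / (b * c * l)) * ((\<xi>0 - \<xi> tb) / sqrt S)
      = (\<xi>0 - \<xi> tb) / K" unfolding K_eq by simp
  have fin: "1 / (2 * sqrt (2 * \<xi>0)) * (1 / (b * c * l)) * ((\<xi>0 - \<xi> tb) / sqrt S) \<le> t0 - tb"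
    using le1 eq1 by linarith
  show ?thesis using fin unfolding \<xi>_def S_def .
qed

end
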